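(* Let $P$ be a finite poset with an interval representation $\{[\ell(x),r(x)] : x\in P\}$ in which every interval has length $0$ or $1$ and no two elements are assigned the same interval. Let $Q$ be the subposet of elements assigned length-$1$ intervals, and partition $Q$ into antichains $A_1,\dots,A_t$ by successively removing minimal elements ($A_1$ the minimal elements of $Q$, $A_2$ the minimal elements of $Q\setminus A_1$, etc.). For $1\le i\le t$ let $p_i=\min\{r(x): x\in A_i\}$. Let $D_0$ be the set of length-$0$ elements $[c,c]$ with $c\le p_1$, $D_i$ (for $1\le i\le t-1$) those with $c\in(p_i,p_{i+1}]$, and $D_t$ those with $c>p_t$. Then: (a) a length-$1$ element belongs to $A_i$ if and only if its interval contains $p_i$; (b) every element of $A_{i+2}$ is greater in $P$ than every element of $D_i$, for $0\le i\le t-2$; (c) every element of $D_i$ is greater in $P$ than every element of $A_{i-1}$, for $2\le i\le t$; (d) every element of $A_j$ is greater in $P$ than every element of $A_i$ whenever $j\ge i+2$.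
   Context: Posets are finite and reflexive. An interval representation of a poset $P$ assigns to each element $x$ a closed bounded interval $[\ell(x), r(x)]$ (possibly degenerate) such that for distinct $x,y$, $x<y$ in $P$ if and only if $r(x)<\ell(y)$. *)

theory Defs
  imports Main "HOL-Library.Multiset" Complex_Main
begin

definition minimals :: "'a rel \<Rightarrow> 'a set \<Rightarrow> 'a set" where
  "minimals R S = {x \<in> S. \<not> (\<exists>y\<in>S. y \<noteq> x \<and> (y, x) \<in> R)}"

fun remaining :: "'a rel \<Rightarrow> 'a set \<Rightarrow> nat \<Rightarrow> 'a set" where
  "remaining R Q 0 = Q"
| "remaining R Q (Suc n) = remaining R Q n - minimals R (remaining R Q n)"

text \<open>The i-th antichain A_i (1-indexed): minimal elements of Q minus A_1,...,A_(i-1).\<close>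
definition layer :: "'a rel \<Rightarrow> 'a set \<Rightarrow> nat \<Rightarrow> 'a set" where
  "layer R Q i = minimals R (remaining R Q (i - 1))"

definition num_layers :: "'a rel \<Rightarrow> 'a set \<Rightarrow> nat" where
  "num_layers R Q = (LEAST n. remaining R Q n = {})"

end

theory Submission
  imports Defs
begin

lemma argmin_ex: "finite S \<Longrightarrow> S \<noteq> {} \<Longrightarrow> \<exists>y\<in>S. f y = Min (f ` S)"
proof -
  assume "finite S" "S \<noteq> {}"
  hence "Min (f ` S) \<in> f ` S" by (intro Min_in) auto
  thus ?thesis by auto
qed

declare remaining.simps(2) [simp del]

theorem mainTheorem8:
  fixes P :: "'a set" and R :: "'a rel" and l r :: "'a \<Rightarrow> real"
  assumes fin: "finite P"
    and po: "partial_order_on P R"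
    and rep: "\<forall>x\<in>P. \<forall>y\<in>P. x \<noteq> y \<longrightarrow> ((x, y) \<in> R \<longleftrightarrow> r x < l y)"
    and len: "\<forall>x\<in>P. r x - l x = 0 \<or> r x - l x = 1"
    and inj: "inj_on (\<lambda>x. (l x, r x)) P"
  defines "Q \<equiv> {x \<in> P. r x - l x = 1}"
    and "Z \<equiv> {x \<in> P. r x - l x = 0}"
  defines "t \<equiv> num_layers R Q"
    and "A \<equiv> layer R Q"
  defines "p \<equiv> (\<lambda>i. Min (r ` A i))"
  defines "D \<equiv> (\<lambda>i. if i = 0 then {x \<in> Z. l x \<le> p 1}
                     else if i < t then {x \<in> Z. p i < l x \<and> l x \<le> p (i + 1)}
                     else {x \<in> Z. p t < l x})"
  shows "(\<forall>i. 1 \<le> i \<and> i \<le> t \<longrightarrow> (\<forall>x\<in>Q. x \<in> A i \<longleftrightarrow> l x \<le> p i \<and> p i \<le> r x))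
       \<and> (\<forall>i. i + 2 \<le> t \<longrightarrow> (\<forall>x\<in>D i. \<forall>y\<in>A (i + 2). x \<noteq> y \<and> (x, y) \<in> R))
       \<and> (\<forall>i. 2 \<le> i \<and> i \<le> t \<longrightarrow> (\<forall>x\<in>A (i - 1). \<forall>y\<in>D i. x \<noteq> y \<and> (x, y) \<in> R))
       \<and> (\<forall>i j. 1 \<le> i \<and> i + 2 \<le> j \<and> j \<le> t \<longrightarrow> (\<forall>x\<in>A i. \<forall>y\<in>A j. x \<noteq> y \<and> (x, y) \<in> R))"
proof -
  let ?Rm = "remaining R Q"
  define m where "m k = Min (r ` ?Rm k)" for k
  have QP: "Q \<subseteq> P" by (auto simp: Q_def)
  have Qr: "\<And>x. x \<in> Q \<Longrightarrow> r x = l x + 1" by (auto simp: Q_def)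
  have finQ: "finite Q" using fin QP finite_subset by blast
  have sub: "?Rm k \<subseteq> Q" for k by (induction k) (auto simp: remaining.simps)
  have Rr: "r x = l x + 1" if "x \<in> ?Rm k" for x k
  proof -
    have "x \<in> Q" using sub[of k] that by (rule subsetD)
    thus ?thesis by (rule Qr)
  qed
  have mono: "j \<le> k \<Longrightarrow> ?Rm k \<subseteq> ?Rm j" for j k
    by (induction k) (auto simp: le_Suc_eq remaining.simps)
  have finR: "finite (?Rm k)" for k using finite_subset[OF sub finQ] .
  have concl: "x \<in> P \<Longrightarrow> y \<in> P \<Longrightarrow> r x < l y \<Longrightarrow> x \<noteq> y \<and> (x, y) \<in> R" for x y
  proof -
    assume a: "x \<in> P" "y \<in> P" "r x < l y"
    have "x \<noteq> y" using a len by fastforce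
    thus ?thesis using a rep by blast
  qed
  have minchar: "minimals R S = {x\<in>S. l x \<le> Min (r ` S)}"
    if S: "S \<subseteq> Q" "finite S" "S \<noteq> {}" for S
  proof (intro set_eqI iffI)
    fix x assume "x \<in> minimals R S"
    hence x: "x \<in> S" and nm: "\<not> (\<exists>y\<in>S. y \<noteq> x \<and> (y, x) \<in> R)" by (auto simp: minimals_def)
    obtain y where y: "y \<in> S" "r y = Min (r ` S)" using argmin_ex[of S r] S by blast
    show "x \<in> {x\<in>S. l x \<le> Min (r ` S)}"
    proof (rule ccontr)
      assume "x \<notin> {x\<in>S. l x \<le> Min (r ` S)}"
      hence "r y < l x" using x y by auto
      moreover have "r x = l x + 1" using Qr x S by auto
      ultimately have "y \<noteq> x \<and> (y, x) \<in> R" using concl[of y x] x y S QP by auto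
      thus False using nm y by blast
    qed
  next
    fix x assume "x \<in> {x\<in>S. l x \<le> Min (r ` S)}"
    hence x: "x \<in> S" "l x \<le> Min (r ` S)" by auto
    have "\<not> (y, x) \<in> R" if "y \<in> S" "y \<noteq> x" for y
    proof
      assume "(y, x) \<in> R"
      hence "r y < l x" using rep that x S QP by blast
      moreover have "Min (r ` S) \<le> r y" using that S by auto
      ultimately show False using x by auto
    qed
    thus "x \<in> minimals R S" using x by (auto simp: minimals_def)
  qed
  have step: "?Rm (Suc k) = {x \<in> ?Rm k. m k < l x}" if "?Rm k \<noteq> {}" for k
  proof -
    have mc: "minimals R (?Rm k) = {x \<in> ?Rm k. l x \<le> m k}"
      using minchar[OF sub finR that] unfolding m_def .
    have "?Rm (Suc k) = ?Rm k - minimals R (?Rm k)" by (simp only: remaining.simps)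
    also have "\<dots> = ?Rm k - {x \<in> ?Rm k. l x \<le> m k}" by (simp only: mc)
    also have "\<dots> = {x \<in> ?Rm k. m k < l x}" by (auto simp del: remaining.simps simp add: not_le)
    finally show ?thesis .
  qed
  have argmin: "\<exists>y\<in>?Rm k. r y = m k" if "?Rm k \<noteq> {}" for k
    using argmin_ex[OF finR that, of r] by (auto simp: m_def)
  have mle: "x \<in> ?Rm k \<Longrightarrow> m k \<le> r x" for x k
    unfolding m_def by (rule Min_le[OF finite_imageI[OF finR] imageI])
  have card: "?Rm n = {} \<or> card (?Rm n) + n \<le> card Q" for n
  proof (induction n)
    case 0 then show ?case by simp
  next
    case (Suc n)
    show ?case
    proof (cases "?Rm n = {}")
      case True then show ?thesis by (simp add: remaining.simps)
    next
      case False
      then obtain y where y: "y \<in> ?Rm n" "r y = m n" using argmin by blast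
      have "l y \<le> r y" using Rr[OF y(1)] by simp
      hence "y \<notin> ?Rm (Suc n)" using step[OF False] y by auto
      hence "?Rm (Suc n) \<subset> ?Rm n" using y step[OF False] by auto
      hence "card (?Rm (Suc n)) < card (?Rm n)" using finR psubset_card_mono by blast
      then show ?thesis using Suc False by auto
    qed
  qed
  have ex: "?Rm (Suc (card Q)) = {}" using card[of "Suc (card Q)"] by auto
  have tE: "?Rm t = {}" unfolding t_def num_layers_def by (rule LeastI, rule ex)
  have neiff: "?Rm k \<noteq> {} \<longleftrightarrow> k < t" for k
  proof
    assume "?Rm k \<noteq> {}" thus "k < t" using mono[of t k] tE by (cases "t \<le> k") auto
  next
    assume "k < t" thus "?Rm k \<noteq> {}" unfolding t_def num_layers_def by (rule not_less_Least)
  qed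
  have argt: "\<exists>y\<in>?Rm k. r y = m k" if "k < t" for k
  proof -
    have "?Rm k \<noteq> {}" using neiff[of k] that by simp
    thus ?thesis by (rule argmin)
  qed
  have Akey: "A (Suc k) = {x \<in> ?Rm k. l x \<le> m k}" if "k < t" for k
  proof -
    have "?Rm k \<noteq> {}" using neiff[of k] that by simp
    hence "minimals R (?Rm k) = {x \<in> ?Rm k. l x \<le> m k}"
      using minchar[OF sub finR] unfolding m_def by blast
    thus ?thesis by (simp add: A_def layer_def)
  qed
  have pk: "p (Suc k) = m k" if k: "k < t" for k
  proof -
    obtain y where y: "y \<in> ?Rm k" "r y = m k" using argt[OF k] by blast
    have "l y \<le> r y" using Rr[OF y(1)] by simp
    hence yA: "y \<in> A (Suc k)" using Akey[OF k] y by auto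
    have finA: "finite (A (Suc k))" using Akey[OF k] finR by auto
    show ?thesis unfolding p_def
    proof (rule Min_eqI)
      show "finite (r ` A (Suc k))" using finA by simp
    next
      fix z assume "z \<in> r ` A (Suc k)"
      then obtain w where w: "w \<in> A (Suc k)" "z = r w" by blast
      hence "w \<in> ?Rm k" using Akey[OF k] by blast
      thus "m k \<le> z" using mle w by simp
    next
      show "m k \<in> r ` A (Suc k)" using rev_image_eqI[OF yA] y(2) by metis
    qed
  qed
  have lgt: "m i < l y" if "i < k" "y \<in> ?Rm k" for i k y
  proof -
    have "?Rm k \<noteq> {}" using that(2) by blast
    hence "k < t" using neiff[of k] by simp
    hence "i < t" using that(1) by simp
    hence it: "?Rm i \<noteq> {}" using neiff[of i] by simp
    have "?Rm k \<subseteq> ?Rm (Suc i)" using mono[of "Suc i" k] that(1) by simp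
    hence "y \<in> ?Rm (Suc i)" using that(2) by blast
    thus ?thesis unfolding step[OF it] by blast
  qed
  have mgap: "m a + 1 < m (Suc a)" if sa: "Suc a < t" for a
  proof -
    obtain z where z: "z \<in> ?Rm (Suc a)" "r z = m (Suc a)" using argt[OF sa] by blast
    have "m a < l z" using lgt[of a "Suc a" z] z(1) by simp
    moreover have "r z = l z + 1" using Rr[OF z(1)] .
    ultimately show ?thesis using z by auto
  qed
  have early: "x \<in> Q \<Longrightarrow> x \<notin> ?Rm k \<Longrightarrow> \<exists>j<k. x \<in> ?Rm j \<and> l x \<le> m j" for x k
  proof (induction k)
    case 0 then show ?case by simp
  next
    case (Suc k)
    show ?case
    proof (cases "x \<in> ?Rm k")
      case True
      hence ne: "?Rm k \<noteq> {}" by blast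
      have "x \<notin> ?Rm (Suc k)" using Suc.prems by blast
      hence "\<not> m k < l x" using True unfolding step[OF ne] by blast
      hence "x \<in> ?Rm k \<and> l x \<le> m k" using True by simp
      then show ?thesis by blast
    next
      case False
      then obtain j where "j < k" "x \<in> ?Rm j \<and> l x \<le> m j" using Suc.IH Suc.prems(1) by blast
      then show ?thesis using less_SucI by blast
    qed
  qed
  have Ain: "x \<in> ?Rm k \<and> l x \<le> m k" if "k < t" "x \<in> A (Suc k)" for k x
    using Akey that by auto
  have partA: "\<forall>i. 1 \<le> i \<and> i \<le> t \<longrightarrow> (\<forall>x\<in>Q. x \<in> A i \<longleftrightarrow> l x \<le> p i \<and> p i \<le> r x)"
  proof (intro allI impI ballI)
    fix i x assume i: "1 \<le> i \<and> i \<le> t" and xQ: "x \<in> Q"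
    define k where "k = i - 1"
    have ik: "i = Suc k" "k < t" using i by (auto simp: k_def)
    show "x \<in> A i \<longleftrightarrow> l x \<le> p i \<and> p i \<le> r x"
    proof
      assume "x \<in> A i"
      hence "x \<in> A (Suc k)" using ik(1) by simp
      hence xk: "x \<in> ?Rm k" "l x \<le> m k" using Ain[OF ik(2)] by blast+
      have "m k \<le> r x" using mle[OF xk(1)] .
      moreover have "p i = m k" using pk[OF ik(2)] ik(1) by simp
      ultimately show "l x \<le> p i \<and> p i \<le> r x" using xk(2) by simp
    next
      assume h: "l x \<le> p i \<and> p i \<le> r x"
      have "p i = m k" using pk[OF ik(2)] ik(1) by simp
      hence h': "l x \<le> m k" "m k \<le> r x" using h by simp_all
      show "x \<in> A i"
      proof (cases "x \<in> ?Rm k")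
        case True
        hence "x \<in> A (Suc k)" using Akey[OF ik(2)] h'(1) by blast
        thus ?thesis using ik(1) by simp
      next
        case False
        then obtain j where j: "j < k" "x \<in> ?Rm j" "l x \<le> m j" using early xQ by blast
        obtain y where y: "y \<in> ?Rm k" "r y = m k" using argt[OF ik(2)] by blast
        have "m j < l y" using lgt[OF j(1) y(1)] .
        moreover have "r y = l y + 1" using Rr[OF y(1)] .
        moreover have "r x = l x + 1" using Qr xQ by blast
        ultimately have False using h'(2) j(3) y(2) by linarith
        thus ?thesis ..
      qed
    qed
  qed
  have partB: "\<forall>i. i + 2 \<le> t \<longrightarrow> (\<forall>x\<in>D i. \<forall>y\<in>A (i + 2). x \<noteq> y \<and> (x, y) \<in> R)"
  proof (intro allI impI ballI)
    fix i x y assume i: "i + 2 \<le> t" and x: "x \<in> D i" and y: "y \<in> A (i + 2)"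
    have xZ: "x \<in> P" "r x = l x" using x by (auto simp: D_def Z_def split: if_splits)
    have "l x \<le> m i"
    proof (cases "i = 0")
      case True thus ?thesis using x pk[of 0] i by (auto simp: D_def)
    next
      case False thus ?thesis using x pk[of i] i by (auto simp: D_def)
    qed
    moreover have "y \<in> ?Rm (Suc i)" using Ain[of "Suc i" y] y i by auto
    hence "m i < l y" using lgt[of i "Suc i" y] by auto
    moreover have "y \<in> P" using \<open>y \<in> ?Rm (Suc i)\<close> sub QP by blast
    ultimately show "x \<noteq> y \<and> (x, y) \<in> R" using concl xZ by auto
  qed
  have partC: "\<forall>i. 2 \<le> i \<and> i \<le> t \<longrightarrow> (\<forall>x\<in>A (i - 1). \<forall>y\<in>D i. x \<noteq> y \<and> (x, y) \<in> R)"
  proof (intro allI impI ballI)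
    fix i x y assume i: "2 \<le> i \<and> i \<le> t" and x: "x \<in> A (i - 1)" and y: "y \<in> D i"
    define a where "a = i - 2"
    have ia: "i - 1 = Suc a" "i = Suc (Suc a)" "Suc a < t" using i by (auto simp: a_def)
    have xa: "x \<in> ?Rm a" "l x \<le> m a" using Ain[of a x] x ia by auto
    have "r x = l x + 1" using Rr[OF xa(1)] .
    moreover have "m a + 1 < m (Suc a)" using mgap ia by blast
    moreover have "m (Suc a) = p i" using pk[of "Suc a"] ia by auto
    moreover have "p i < l y" "y \<in> P" using y i by (auto simp: D_def Z_def split: if_splits)
    moreover have "x \<in> P" using xa sub QP by blast
    ultimately show "x \<noteq> y \<and> (x, y) \<in> R" using concl xa by auto
  qed
  have partD: "\<forall>i j. 1 \<le> i \<and> i + 2 \<le> j \<and> j \<le> t \<longrightarrow> (\<forall>x\<in>A i. \<forall>y\<in>A j. x \<noteq> y \<and> (x, y) \<in> R)"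
  proof (intro allI impI ballI)
    fix i j x y assume ij: "1 \<le> i \<and> i + 2 \<le> j \<and> j \<le> t" and x: "x \<in> A i" and y: "y \<in> A j"
    define a where "a = i - 1"
    define b where "b = j - 1"
    have ab: "i = Suc a" "j = Suc b" "Suc a < b" "b < t" using ij by (auto simp: a_def b_def)
    have xa: "x \<in> ?Rm a" "l x \<le> m a" using Ain[of a x] x ab by auto
    have yb: "y \<in> ?Rm b" using Ain[of b y] y ab by auto
    have "r x = l x + 1" using Rr[OF xa(1)] .
    moreover have "m a + 1 < m (Suc a)" using mgap ab by simp
    moreover have "m (Suc a) < l y" using lgt ab yb by blast
    moreover have "x \<in> P" "y \<in> P" using xa yb sub QP by blast+
    ultimately show "x \<noteq> y \<and> (x, y) \<in> R" using concl xa by auto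
  qed
  show ?thesis using partA partB partC partD by blast
qed

end
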